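(* There is an absolute constant $c>0$ such that for every prime $p$ and every divisor $m$ of $p-1$ with $d=(p-1)/m\ge2$, we have $\vartheta(m,p)\ge c\,p^{1/\varphi(d)}$.
   Context: For a prime $p$ and a divisor $m$ of $p-1$, $\mathcal G_m\subseteq\mathbb F_p^*$ is the unique multiplicative subgroup of index $m$ (order $d=(p-1)/m$). For $\lambda\in\mathbb F_p^*$, $\rho(\lambda,p)=\min\{rs: r,s\text{ positive integers},\ r\equiv\lambda s\pmod p\}$, and $\vartheta(m,p)=\min_{\lambda\in\mathcal G_m,\ \lambda\ne1}\rho(\lambda,p)$. $\varphi$ is Euler's function. *)

theory Defs
  imports "HOL-Number_Theory.Number_Theory"
begin

text \<open>Elements of F_p^* are represented by their residues in {1..p-1}.
  G_m is the unique subgroup of F_p^* of index m, i.e. of order d = (p-1)/m,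
  which is the set of residues x with x^d = 1 in F_p.\<close>
definition subgrp_index :: "nat \<Rightarrow> nat \<Rightarrow> nat set" where
  "subgrp_index m p = {x \<in> {1..p-1}. [x ^ ((p - 1) div m) = 1] (mod p)}"

definition rho :: "nat \<Rightarrow> nat \<Rightarrow> nat" where
  "rho l p = (LEAST n. \<exists>r s. r > 0 \<and> s > 0 \<and> n = r * s \<and> [r = l * s] (mod p))"

definition theta :: "nat \<Rightarrow> nat \<Rightarrow> nat" where
  "theta m p = Min {rho l p | l. l \<in> subgrp_index m p \<and> l \<noteq> 1}"

end

theory Submission
  imports Defs "HOL-Computational_Algebra.Polynomial"
begin

abbreviation ip :: "int poly \<Rightarrow> complex poly" where "ip \<equiv> map_poly of_int"

lemma ip_mult: "ip (a * b) = ip a * ip b"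
  by (intro poly_eqI) (simp_all add: coeff_map_poly coeff_mult)

lemma ip_prod: "ip (prod f A) = (\<Prod>x\<in>A. ip (f x))"
proof (induction A rule: infinite_finite_induct)
  case (insert x F) then show ?case by (simp add: ip_mult)
qed simp_all

lemma ip_diff: "ip (a - b) = ip a - ip b"
  by (intro poly_eqI) (simp_all add: coeff_map_poly)

lemma ip_add: "ip (a + b) = ip a + ip b"
  by (intro poly_eqI) (simp_all add: coeff_map_poly)

lemma ip_inj: "ip a = ip b \<Longrightarrow> a = b"
  by (metis (no_types, lifting) coeff_map_poly of_int_0 of_int_eq_iff poly_eqI)

lemma ip_degree: "degree (ip a) = degree a"
  by (rule degree_map_poly) simp

lemma ip_lead: "lead_coeff (ip a) = of_int (lead_coeff a)"
  by (simp add: ip_degree coeff_map_poly)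

lemma ip_monom: "ip (monom 1 n - 1) = monom 1 n - 1"
  by (simp add: ip_diff map_poly_monom)

lemma ip_div:
  assumes "ip f = ip g * h" "lead_coeff g = 1"
  shows "\<exists>q. h = ip q"
proof -
  have g0: "g \<noteq> 0" using assms(2) by auto
  obtain q r where qr: "pseudo_divmod f g = (q, r)" by (cases "pseudo_divmod f g") auto
  have 1: "f = g * q + r" using pseudo_divmod(1)[OF g0 qr] assms(2) by simp
  have 2: "r = 0 \<or> degree r < degree g" using pseudo_divmod(2)[OF g0 qr] .
  have "ip f = ip g * ip q + ip r" unfolding 1 by (simp add: ip_add ip_mult)
  hence "ip g * h = ip g * ip q + ip r" using assms(1) by simp
  hence eq: "ip g * (h - ip q) = ip r" by (simp add: algebra_simps)
  show ?thesis
  proof (rule ccontr)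
    assume "\<not> ?thesis"
    hence "h - ip q \<noteq> 0" by auto
    moreover have "ip g \<noteq> 0" using assms(2) ip_lead[of g] by auto
    ultimately have "degree (ip g * (h - ip q)) \<ge> degree g"
      by (simp add: degree_mult_eq ip_degree)
    moreover have "ip r \<noteq> 0" using eq \<open>h - ip q \<noteq> 0\<close> \<open>ip g \<noteq> 0\<close> by auto
    ultimately show False using eq 2 ip_degree[of r] by auto
  qed
qed

definition Pr :: "nat \<Rightarrow> complex set" where
  "Pr n = {z. z ^ n = 1 \<and> (\<forall>k. 0 < k \<and> k < n \<longrightarrow> z ^ k \<noteq> 1)}"

definition cyc :: "nat \<Rightarrow> complex poly" where
  "cyc n = (\<Prod>z\<in>Pr n. [:-z, 1:])"

lemma Pr_finite: "n > 0 \<Longrightarrow> finite (Pr n)"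
  by (rule finite_subset[of _ "{z. z ^ n = 1}"]) (auto simp: Pr_def intro: finite_roots_unity)

lemma Pr_1: "Pr 1 = {1}" by (auto simp: Pr_def)

lemma roots_union:
  assumes "n > 0"
  shows "{z::complex. z ^ n = 1} = (\<Union>e\<in>{e. e dvd n}. Pr e)"
proof safe
  fix z :: complex assume z: "z ^ n = 1"
  define e where "e = (LEAST k. 0 < k \<and> z ^ k = 1)"
  have ex: "0 < n \<and> z ^ n = 1" using assms z by auto
  have e: "0 < e \<and> z ^ e = 1" unfolding e_def by (rule LeastI[of _ n]) (use ex in auto)
  have le: "\<And>k. 0 < k \<and> z ^ k = 1 \<Longrightarrow> e \<le> k" unfolding e_def by (rule Least_le)
  have "z ^ n = z ^ (e * (n div e) + n mod e)" by (simp only: mult_div_mod_eq)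
  also have "\<dots> = (z ^ e) ^ (n div e) * z ^ (n mod e)" by (simp only: power_add power_mult)
  finally have "z ^ n = (z ^ e) ^ (n div e) * z ^ (n mod e)" .
  hence "z ^ (n mod e) = 1" using e z by simp
  moreover have "n mod e < e" using e by auto
  ultimately have "n mod e = 0"
    using le[of "n mod e"] by (metis leD neq0_conv)
  hence "e dvd n" by auto
  moreover have "z \<in> Pr e" unfolding Pr_def
  proof (intro CollectI conjI allI impI)
    show "z ^ e = 1" using e by simp
    fix k assume k: "0 < k \<and> k < e"
    show "z ^ k \<noteq> 1"
    proof
      assume "z ^ k = 1"
      hence "e \<le> k" using le[of k] k by simp
      thus False using k by simp
    qed
  qed
  ultimately show "z \<in> (\<Union>e\<in>{e. e dvd n}. Pr e)" by auto
next
  fix z e assume "e dvd n" "z \<in> Pr e"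
  then obtain k where "n = e * k" by auto
  thus "z ^ n = 1" using \<open>z \<in> Pr e\<close> by (simp add: Pr_def power_mult)
qed

lemma Pr_disj:
  assumes "e \<noteq> e'" "e > 0" "e' > 0"
  shows "Pr e \<inter> Pr e' = {}"
proof (rule equals0I)
  fix z assume z: "z \<in> Pr e \<inter> Pr e'"
  have a: "z ^ e = 1" "\<forall>k. 0 < k \<and> k < e \<longrightarrow> z ^ k \<noteq> 1" using z by (simp_all add: Pr_def)
  have b: "z ^ e' = 1" "\<forall>k. 0 < k \<and> k < e' \<longrightarrow> z ^ k \<noteq> 1" using z by (simp_all add: Pr_def)
  show False
  proof (cases "e < e'")
    case True thus False using a(1) b(2) assms(2) by blast
  next
    case False
    hence "e' < e" using assms(1) by simp
    thus False using b(1) a(2) assms(3) by blast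
  qed
qed

lemma roots_prod:
  assumes "n > 0"
  shows "(\<Prod>z\<in>{z::complex. z ^ n = 1}. [:-z, 1:]) = monom 1 n - 1"
proof (rule poly_eqI_degree_lead_coeff[where n = n and A = "{z::complex. z ^ n = 1}"])
  have fin: "finite {z::complex. z ^ n = 1}" using assms by (intro finite_roots_unity) auto
  have card: "card {z::complex. z ^ n = 1} = n" using card_roots_unity_eq assms by blast
  have deg: "degree (\<Prod>z\<in>{z::complex. z ^ n = 1}. [:-z, 1:]) = n"
    by (subst degree_prod_sum_eq) (auto simp: card)
  have lc: "lead_coeff (\<Prod>z\<in>{z::complex. z ^ n = 1}. [:-z, 1:]) = 1"
    by (simp add: lead_coeff_prod)
  show "coeff (\<Prod>z\<in>{z::complex. z ^ n = 1}. [:-z, 1:]) n = coeff (monom 1 n - 1) n"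
    using lc deg assms by (simp add: coeff_monom)
  show "n \<le> card {z::complex. z ^ n = 1}" using card by simp
  show "degree (\<Prod>z\<in>{z::complex. z ^ n = 1}. [:-z, 1:]) \<le> n" using deg by simp
  show "degree (monom (1::complex) n - 1) \<le> n"
    by (metis degree_diff_le degree_monom_le degree_1 le0)
  fix z :: complex assume "z \<in> {z. z ^ n = 1}"
  thus "poly (\<Prod>z\<in>{z::complex. z ^ n = 1}. [:-z, 1:]) z = poly (monom 1 n - 1) z"
    using fin by (auto simp: poly_prod poly_monom)
qed

lemma cyc_prod:
  assumes "n > 0"
  shows "monom 1 n - 1 = (\<Prod>e\<in>{e. e dvd n}. cyc e)"
proof -
  have "monom 1 n - 1 = (\<Prod>z\<in>(\<Union>e\<in>{e. e dvd n}. Pr e). [:-z, 1:])"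
    using roots_prod[OF assms] roots_union[OF assms] by simp
  also have "\<dots> = (\<Prod>e\<in>{e. e dvd n}. cyc e)"
    unfolding cyc_def
  proof (rule prod.UNION_disjoint)
    show "finite {e. e dvd n}" using assms by (simp add: finite_divisors_nat)
    show "\<forall>e\<in>{e. e dvd n}. finite (Pr e)" using assms
      by (auto intro: Pr_finite dvd_pos_nat)
    show "\<forall>A\<in>{e. e dvd n}. \<forall>B\<in>{e. e dvd n}. A \<noteq> B \<longrightarrow> Pr A \<inter> Pr B = {}"
    proof (intro ballI impI)
      fix A B assume "A \<in> {e. e dvd n}" "B \<in> {e. e dvd n}" "A \<noteq> B"
      moreover have "0 < A" "0 < B" using calculation dvd_pos_nat[OF assms] by auto
      ultimately show "Pr A \<inter> Pr B = {}" by (intro Pr_disj)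
    qed
  qed
  finally show ?thesis .
qed

lemma cyc_lead: "lead_coeff (cyc n) = 1"
  by (simp add: cyc_def lead_coeff_prod)

lemma cyc_degree: "n > 0 \<Longrightarrow> degree (cyc n) = card (Pr n)"
  unfolding cyc_def by (subst degree_prod_sum_eq) auto

lemma cyc_int: "n > 0 \<Longrightarrow> \<exists>c. cyc n = ip c \<and> lead_coeff c = 1"
proof (induction n rule: less_induct)
  case (less n)
  let ?S = "{e. e dvd n \<and> e < n}"
  have IH: "\<exists>c. cyc e = ip c \<and> lead_coeff c = 1" if "e \<in> ?S" for e
  proof -
    have "0 < e" "e < n" using that dvd_pos_nat[OF less.prems] by auto
    thus ?thesis using less.IH by blast
  qed
  hence "\<forall>e\<in>?S. \<exists>c. cyc e = ip c \<and> lead_coeff c = 1" by blast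
  from bchoice[OF this] obtain C where C: "\<forall>e\<in>?S. cyc e = ip (C e) \<and> lead_coeff (C e) = 1"
    by blast
  have finS: "finite ?S" by auto
  have split: "{e. e dvd n} = insert n ?S" using less.prems by (auto dest: dvd_imp_le)
  have "monom 1 n - 1 = cyc n * (\<Prod>e\<in>?S. cyc e)"
    using cyc_prod[OF less.prems] split finS by simp
  also have "(\<Prod>e\<in>?S. cyc e) = ip (\<Prod>e\<in>?S. C e)"
    using C by (simp add: ip_prod)
  finally have "ip (monom 1 n - 1) = ip (\<Prod>e\<in>?S. C e) * cyc n"
    by (simp add: ip_monom mult.commute)
  moreover have "lead_coeff (\<Prod>e\<in>?S. C e) = 1" using C by (simp add: lead_coeff_prod)
  ultimately obtain q where q: "cyc n = ip q" using ip_div by blast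
  have "lead_coeff q = 1" using cyc_lead[of n] ip_lead[of q] q by simp
  with q show ?case by blast
qed

lemma Pr_card:
  assumes e: "e > 0"
  shows "card (Pr e) \<le> totient e"
proof -
  let ?f = "\<lambda>k::nat. cis (2 * pi * real k / real e)"
  have sub: "Pr e \<subseteq> ?f ` totatives e"
  proof
    fix z assume z: "z \<in> Pr e"
    hence "z \<in> {z. z ^ e = 1}" by (simp add: Pr_def)
    then obtain k where k: "k < e" "z = ?f k"
      using bij_betw_roots_unity[OF e] unfolding bij_betw_def by auto
    show "z \<in> ?f ` totatives e"
    proof (cases "k = 0")
      case True
      then have z1: "z = 1" using k by simp
      have "\<not> (0 < (1::nat) \<and> 1 < e)" using z z1 by (auto simp: Pr_def)
      hence "e = 1" using e by auto
      thus ?thesis using z1 by (auto simp: totatives_def intro!: image_eqI[of _ _ 1])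
    next
      case False
      have "coprime k e"
      proof (rule ccontr)
        assume nc: "\<not> coprime k e"
        define g where "g = gcd k e"
        have g1: "g > 1" using nc False unfolding g_def
          by (metis coprime_iff_gcd_eq_1 gcd_pos_nat less_one linorder_neqE_nat neq0_conv)
        obtain a where a: "e = g * a" unfolding g_def by (metis gcd_dvd2 dvdE)
        obtain b where b: "k = g * b" unfolding g_def by (metis gcd_dvd1 dvdE)
        have a0: "0 < a" using a e by auto
        have ae: "a < e" using a g1 a0 by simp
        have "z ^ a = cis (real a * (2 * pi * real k / real e))" using k by (simp add: DeMoivre)
        also have "real a * (2 * pi * real k / real e) = 2 * pi * real b"
          using a b a0 g1 by (simp add: field_simps)
        also have "cis (2 * pi * real b) = 1" by (rule cis_multiple_2pi) simp
        finally show False using z a0 ae by (auto simp: Pr_def)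
      qed
      hence "k \<in> totatives e" using False k by (auto simp: totatives_def)
      thus ?thesis using k by auto
    qed
  qed
  have "card (Pr e) \<le> card (?f ` totatives e)"
    by (rule card_mono[OF _ sub]) auto
  also have "\<dots> \<le> card (totatives e)" by (rule card_image_le) auto
  finally show ?thesis by (simp add: totient_def)
qed

lemma key:
  fixes c :: "int poly" and r s e :: nat
  assumes ce: "cyc e = ip c" and e2: "e \<ge> 2" and r: "r > 0" and s: "s > 0"
  defines "F \<equiv> (\<Sum>i\<le>degree c. coeff c i * int r ^ i * int s ^ (degree c - i))"
  shows "F \<noteq> 0" "real_of_int \<bar>F\<bar> \<le> (real r + real s) ^ degree c"
proof -
  define D where "D = degree c"
  have e0: "e > 0" using e2 by simp
  have D: "D = card (Pr e)" using cyc_degree[OF e0] ce ip_degree[of c] D_def by simp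
  have degc: "degree (cyc e) = D" using ce ip_degree[of c] D_def by simp
  have "(of_int F :: complex) = (\<Sum>i\<le>D. of_int (coeff c i) * of_nat r ^ i * of_nat s ^ (D - i))"
    by (simp add: F_def D_def)
  also have "\<dots> = of_nat s ^ D * (\<Sum>i\<le>D. coeff (cyc e) i * (of_nat r / of_nat s) ^ i)"
    unfolding sum_distrib_left
  proof (rule sum.cong[OF refl])
    fix i assume "i \<in> {..D}"
    hence "(of_nat s :: complex) ^ D = of_nat s ^ i * of_nat s ^ (D - i)"
      by (simp add: power_add[symmetric])
    thus "of_int (coeff c i) * of_nat r ^ i * of_nat s ^ (D - i) =
          (of_nat s :: complex) ^ D * (coeff (cyc e) i * (of_nat r / of_nat s) ^ i)"
      using s by (simp add: ce coeff_map_poly power_divide field_simps)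
  qed
  also have "(\<Sum>i\<le>D. coeff (cyc e) i * (of_nat r / of_nat s) ^ i) = poly (cyc e) (of_nat r / of_nat s)"
    by (simp add: poly_altdef degc)
  also have "\<dots> = (\<Prod>z\<in>Pr e. of_nat r / of_nat s - z)"
    by (simp add: cyc_def poly_prod)
  also have "(of_nat s :: complex) ^ D * \<dots> = (\<Prod>z\<in>Pr e. of_nat s * (of_nat r / of_nat s - z))"
    by (simp add: prod.distrib D)
  also have "\<dots> = (\<Prod>z\<in>Pr e. of_nat r - z * of_nat s)"
    using s by (intro prod.cong refl) (simp add: field_simps)
  finally have eq: "(of_int F :: complex) = (\<Prod>z\<in>Pr e. of_nat r - z * of_nat s)" .
  have nz: "of_nat r - z * of_nat s \<noteq> (0::complex)" if z: "z \<in> Pr e" for z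
  proof
    assume "of_nat r - z * of_nat s = (0::complex)"
    hence zr: "z = of_real (real r / real s)" using s by (simp add: field_simps)
    have "z ^ e = 1" using z by (simp add: Pr_def)
    hence "(real r / real s) ^ e = 1" using zr
      by (metis of_real_eq_1_iff of_real_power)
    hence "(real r / real s) ^ e = 1 ^ e" by simp
    hence "real r / real s = 1" using e0 power_eq_imp_eq_base[of "real r / real s" e 1]
      by simp
    hence "z = 1" using zr by simp
    moreover have "z ^ 1 \<noteq> 1" using z e2 by (auto simp: Pr_def)
    ultimately show False by simp
  qed
  have fin: "finite (Pr e)" using Pr_finite[OF e0] .
  show "F \<noteq> 0"
  proof
    assume "F = 0"
    hence "(\<Prod>z\<in>Pr e. of_nat r - z * of_nat s) = (0::complex)" using eq by simp
    thus False using nz fin by simp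
  qed
  have "real_of_int \<bar>F\<bar> = norm (of_int F :: complex)" by simp
  also have "\<dots> = (\<Prod>z\<in>Pr e. norm (of_nat r - z * of_nat s))" by (simp add: eq prod_norm)
  also have "\<dots> \<le> (\<Prod>z\<in>Pr e. real r + real s)"
  proof (rule prod_mono)
    fix z assume z: "z \<in> Pr e"
    have "z ^ e = 1 ^ e" using z by (simp add: Pr_def)
    hence "norm z = norm (1::complex)" using e0 by (rule power_eq_imp_eq_norm)
    hence nz1: "norm z = 1" by simp
    have "norm (of_nat r - z * of_nat s) \<le> norm (of_nat r :: complex) + norm (z * of_nat s)"
      by (rule norm_triangle_ineq4)
    also have "\<dots> = real r + real s" using nz1 by (simp add: norm_mult)
    finally show "0 \<le> norm (of_nat r - z * of_nat s) \<and> norm (of_nat r - z * of_nat s) \<le> real r + real s"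
      by simp
  qed
  also have "\<dots> = (real r + real s) ^ D" by (simp add: D)
  finally show "real_of_int \<bar>F\<bar> \<le> (real r + real s) ^ degree c" by (simp add: D_def)
qed

lemma find_e:
  assumes p: "prime p" and l: "2 \<le> l" "l < p" and d: "d > 0" and cg: "[l ^ d = 1] (mod p)"
  shows "\<exists>e c. e dvd d \<and> e \<ge> 2 \<and> cyc e = ip c \<and> int p dvd poly c (int l)"
proof -
  have "\<forall>n. \<exists>c. n > 0 \<longrightarrow> cyc n = ip c \<and> lead_coeff c = 1" using cyc_int by blast
  from choice[OF this] obtain C where C: "\<And>n. n > 0 \<Longrightarrow> cyc n = ip (C n)" by blast
  let ?D = "{e. e dvd d}"
  have fin: "finite ?D" using d by (simp add: finite_divisors_nat)
  have "(\<Prod>e\<in>?D. cyc e) = (\<Prod>e\<in>?D. ip (C e))"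
    by (rule prod.cong[OF refl]) (use C d dvd_pos_nat in auto)
  hence "ip (monom 1 d - 1) = ip (\<Prod>e\<in>?D. C e)"
    by (simp add: ip_monom ip_prod cyc_prod[OF d])
  hence eqi: "monom 1 d - 1 = (\<Prod>e\<in>?D. C e)" by (rule ip_inj)
  have "poly (monom 1 d - 1) (int l) = int l ^ d - 1" by (simp add: poly_monom)
  hence prodeq: "int l ^ d - 1 = (\<Prod>e\<in>?D. poly (C e) (int l))" using eqi by (simp add: poly_prod)
  have "[int l ^ d = 1] (mod int p)" using cg cong_int_iff[of "l ^ d" 1 p] by simp
  hence "int p dvd int l ^ d - 1" by (simp add: cong_iff_dvd_diff)
  hence dv: "int p dvd (\<Prod>e\<in>?D. poly (C e) (int l))" using prodeq by simp
  have pr: "prime (int p)" using p by (simp add: prime_nat_int_transfer)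
  have "\<exists>e\<in>?D. int p dvd poly (C e) (int l)"
    by (rule iffD1[OF prime_dvd_prod_iff[OF fin pr] dv])
  then obtain e where e: "e \<in> ?D" "int p dvd poly (C e) (int l)" by blast
  have e0: "e > 0" using e(1) d dvd_pos_nat by auto
  have "e \<noteq> 1"
  proof
    assume e1: "e = 1"
    have "cyc 1 = [:-1, 1:]" unfolding cyc_def Pr_1 by simp
    also have "\<dots> = ip [:-1, 1:]" by (simp add: map_poly_pCons)
    finally have "ip (C 1) = ip [:-1, 1:]" using C[of 1] by simp
    hence "C 1 = [:-1, 1:]" by (rule ip_inj)
    hence "int p dvd int l - 1" using e e1 by simp
    moreover have "int l - 1 \<noteq> 0" using l by simp
    ultimately have "\<bar>int p\<bar> \<le> \<bar>int l - 1\<bar>" by (intro dvd_imp_le_int) auto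
    thus False using l by simp
  qed
  hence "e \<ge> 2" using e0 by simp
  thus ?thesis using e C[OF e0] by blast
qed

lemma bound:
  assumes p: "prime p" and l: "2 \<le> l" "l < p" and d: "d > 0" and cg: "[l ^ d = 1] (mod p)"
    and r: "r > 0" and s: "s > 0" and rs: "[r = l * s] (mod p)"
  shows "real p powr (1 / real (totient d)) \<le> 2 * real (r * s)"
proof -
  obtain e c where ec: "e dvd d" "e \<ge> 2" "cyc e = ip c" "int p dvd poly c (int l)"
    using find_e[OF p l d cg] by blast
  define D where "D = degree c"
  define F where "F = (\<Sum>i\<le>degree c. coeff c i * int r ^ i * int s ^ (degree c - i))"
  have F0: "F \<noteq> 0" and Fb: "real_of_int \<bar>F\<bar> \<le> (real r + real s) ^ D"
    using key[OF ec(3) ec(2) r s] unfolding F_def D_def by auto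
  have e0: "e > 0" using ec(2) by simp
  have "D = card (Pr e)" using cyc_degree[OF e0] ec(3) ip_degree[of c] D_def by simp
  also have "\<dots> \<le> totient e" by (rule Pr_card[OF e0])
  also have "\<dots> \<le> totient d" by (rule totient_dvd_mono[OF ec(1) d])
  finally have De: "D \<le> totient d" .
  have rs': "[int r = int l * int s] (mod int p)" using rs cong_int_iff[of r "l * s" p] by simp
  have "[F = (\<Sum>i\<le>D. coeff c i * (int l * int s) ^ i * int s ^ (D - i))] (mod int p)"
    unfolding F_def D_def by (intro cong_sum cong_mult cong_refl cong_pow rs')
  also have "(\<Sum>i\<le>D. coeff c i * (int l * int s) ^ i * int s ^ (D - i)) = int s ^ D * poly c (int l)"
    unfolding poly_altdef sum_distrib_left D_def
  proof (rule sum.cong[OF refl])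
    fix i assume "i \<in> {..degree c}"
    hence "int s ^ degree c = int s ^ i * int s ^ (degree c - i)" by (simp add: power_add[symmetric])
    thus "coeff c i * (int l * int s) ^ i * int s ^ (degree c - i) = int s ^ degree c * (coeff c i * int l ^ i)"
      by (simp add: power_mult_distrib algebra_simps)
  qed
  finally have cgF: "[F = int s ^ D * poly c (int l)] (mod int p)" .
  have "int p dvd int s ^ D * poly c (int l)" using ec(4) by simp
  hence "int p dvd F" using cong_dvd_iff[OF cgF] by simp
  hence "\<bar>int p\<bar> \<le> \<bar>F\<bar>" using F0 by (intro dvd_imp_le_int)
  hence "real p \<le> real_of_int \<bar>F\<bar>" by simp
  also have "\<dots> \<le> (real r + real s) ^ D" by (rule Fb)
  also have "\<dots> \<le> (2 * real (r * s)) ^ D"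
  proof (rule power_mono)
    have "real r \<le> real r * real s" "real s \<le> real r * real s" using r s by auto
    thus "real r + real s \<le> 2 * real (r * s)" by simp
  qed simp
  finally have pD: "real p \<le> (2 * real (r * s)) ^ D" .
  have p1: "real p > 1" using prime_gt_1_nat[OF p] by simp
  have D0: "D > 0"
  proof (rule ccontr)
    assume "\<not> D > 0" hence "D = 0" by simp
    thus False using pD p1 by simp
  qed
  define y where "y = 2 * real (r * s)"
  have y0: "y > 0" using r s by (simp add: y_def)
  have "real p powr (1 / real (totient d)) \<le> real p powr (1 / real D)"
    using De D0 p1 by (intro powr_mono) (auto simp: frac_le)
  also have "\<dots> \<le> (y ^ D) powr (1 / real D)"
    using pD by (intro powr_mono2) (auto simp: y_def)
  also have "y ^ D = y powr real D" using y0 by (simp add: powr_realpow)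
  also have "(y powr real D) powr (1 / real D) = y" using D0 y0 by (simp add: powr_powr)
  finally show ?thesis by (simp add: y_def)
qed

theorem lemma4p1:
  shows "\<exists>c::real. c > 0 \<and>
    (\<forall>p m :: nat. prime p \<longrightarrow> m dvd (p - 1) \<longrightarrow> (p - 1) div m \<ge> 2 \<longrightarrow>
       real (theta m p) \<ge> c * real p powr (1 / real (totient ((p - 1) div m))))"
proof (intro exI[of _ "1/2"] conjI allI impI)
  fix p m :: nat
  assume p: "prime p" and m: "m dvd (p - 1)" and d2: "(p - 1) div m \<ge> 2"
  define d where "d = (p - 1) div m"
  have d0: "d > 0" using d2 d_def by simp
  have p1: "p > 1" using prime_gt_1_nat[OF p] .
  have ddvd: "d dvd p - 1" using m unfolding d_def by (metis dvd_div_mult_self dvd_triv_left)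
  have "card {x \<in> totatives p. ord p x = d} = totient d"
    using prime_card_elements_with_ord_eq_totient[OF p1 p, of d] ddvd by simp
  also have "\<dots> > 0" using d0 by simp
  finally have "card {x \<in> totatives p. ord p x = d} > 0" .
  hence "{x \<in> totatives p. ord p x = d} \<noteq> {}" using card_gt_0_iff by blast
  then obtain x where x: "x \<in> totatives p" "ord p x = d" by auto
  have x1: "x \<in> {1..p-1}"
  proof -
    have "0 < x" "x \<le> p" "coprime x p" using x(1) by (auto simp: totatives_def)
    moreover have "x \<noteq> p" using \<open>coprime x p\<close> p1 by auto
    ultimately show ?thesis by auto
  qed
  have xn1: "x \<noteq> 1" using x(2) d2 d_def by auto
  have "[x ^ d = 1] (mod p)" using ord_works[of x p] x(2) by simp
  hence xs: "x \<in> subgrp_index m p" using x1 unfolding subgrp_index_def d_def by simp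
  let ?A = "{l. l \<in> subgrp_index m p \<and> l \<noteq> 1}"
  have SA: "{rho l p | l. l \<in> subgrp_index m p \<and> l \<noteq> 1} = (\<lambda>l. rho l p) ` ?A" by auto
  have finA: "finite ?A" by (rule finite_subset[of _ "{1..p-1}"]) (auto simp: subgrp_index_def)
  have neA: "?A \<noteq> {}" using xs xn1 by auto
  have "theta m p \<in> (\<lambda>l. rho l p) ` ?A"
    unfolding theta_def SA by (rule Min_in) (use finA neA in auto)
  then obtain l where lA: "l \<in> subgrp_index m p" "l \<noteq> 1" and th: "theta m p = rho l p" by auto
  have l1: "1 \<le> l" "l \<le> p - 1" and lc: "[l ^ d = 1] (mod p)"
    using lA(1) by (auto simp: subgrp_index_def d_def)
  let ?P = "\<lambda>n. \<exists>r s. r > 0 \<and> s > 0 \<and> n = r * s \<and> [r = l * s] (mod p)"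
  have "?P (l * 1)" using l1 by (intro exI[of _ l] exI[of _ 1]) auto
  hence "?P (LEAST n. ?P n)" by (rule LeastI)
  then obtain r s where rs: "r > 0" "s > 0" "rho l p = r * s" "[r = l * s] (mod p)"
    unfolding rho_def by blast
  have "real p powr (1 / real (totient d)) \<le> 2 * real (r * s)"
    using bound[OF p _ _ d0 lc rs(1) rs(2) rs(4)] l1 lA(2) p1 by simp
  thus "1 / 2 * real p powr (1 / real (totient ((p - 1) div m))) \<le> real (theta m p)"
    using th rs(3) unfolding d_def by simp
qed simp

end
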